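(* Let $k>8$ be an integer, $\theta=2\pi/k$, $G=(V,E)$ a unit disk graph, $Y_k=(V,E_Y)$ its Yao graph and $YS_k=(V,E_{YS})$ the output of the Sink step applied to $Y_k$. Let $\overrightarrow{uv}\in E_Y$ and let $w_0=v,w_1,\dots,w_h=u$ be vertices, all lying in $K_v(u)$, such that for each $i=1,\dots,h$: $\overrightarrow{w_iw_{i-1}}\in E_{YS}$, $w_i\in K_{w_{i-1}}(u)$, and $\mathrm{ID}(\overrightarrow{w_iw_{i-1}})\le\mathrm{ID}(\overrightarrow{uw_{i-1}})$. Then there exists $\ell\le h$ such that $|vw_\ell|\ge |uv|/(2\cos\theta)$ and $\sum_{i=0}^{\ell-1}|w_iw_{i+1}|\le \frac{|vw_\ell|}{\cos 2\theta}$.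
   Context: Unit disk graph: $V$ a finite point set in the plane, $E=\{uv:|uv|\le1\}$ with $|uv|$ Euclidean distance. Cones: at each point $x$ the plane is partitioned into $k$ half-open half-closed cones with apex $x$ of angle $\theta$, bounded by $k$ equally spaced rays (same directions at every node); $K_x(y)$ is the cone with apex $x$ containing $y$; $K_x$ an arbitrary such cone. Identifiers: nodes have distinct IDs; $\mathrm{ID}(\overrightarrow{xy})=(|xy|,\mathrm{ID}(x),\mathrm{ID}(y))$ compared lexicographically; $\mathrm{ID}(xy)=\min\{\mathrm{ID}(\overrightarrow{xy}),\mathrm{ID}(\overrightarrow{yx})\}$. Yao step: for each node $x$ and each cone $K_x$ containing the other endpoint of some edge of $E$ incident to $x$, add to $E_Y$ the directed edge $\overrightarrow{xy}$ where $xy$ is such an edge with lowest $\mathrm{ID}(xy)$. Sink step on $(V,E_Y)$: set $E_{YS}=\emptyset$. For each node $v$ and each cone $K_v$: let $I$ be the set of $x$ with $\overrightarrow{xv}\in E_Y$, $x\in K_v$; set $I(v)\leftarrow I$, $J\leftarrow(v)$ (ordered sequence), $T(v)\leftarrow\emptyset$. Repeat until $I$ is empty: remove the first vertex $x$ from $J$; for each cone $K_x$, let $w\in I(x)\cap K_x$ minimize $\mathrm{ID}(\overrightarrow{wx})$ (if any), add $\overrightarrow{wx}$ to $T(v)$, move $w$ from $I$ to $J$, set $I(w)\leftarrow I(x)\cap K_x$. Then add the directed edges of $T(v)$ to $E_{YS}$. *)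

theory Defs
  imports "HOL-Analysis.Analysis"
begin

(* Points of the plane are complex numbers; |xy| = dist x y.
   Cones: k half-open cones of angle 2*pi/k bounded by rays at angles
   alpha + j*2*pi/k (j = 0..k-1), same at every node. A point z <> x
   lies in cone number j of apex x iff the direction angle of z - x lies in
   [alpha + j*theta, alpha + (j+1)*theta) modulo 2*pi. *)

definition cone_idx :: "nat \<Rightarrow> real \<Rightarrow> complex \<Rightarrow> complex \<Rightarrow> nat" where
  "cone_idx k \<alpha> x z = nat \<lfloor>real k * frac ((Arg (z - x) - \<alpha>) / (2 * pi))\<rfloor>"

(* z lies in the cone K_x(y) (apex x excluded) *)
definition in_cone :: "nat \<Rightarrow> real \<Rightarrow> complex \<Rightarrow> complex \<Rightarrow> complex \<Rightarrow> bool" where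
  "in_cone k \<alpha> x y z \<longleftrightarrow> z \<noteq> x \<and> cone_idx k \<alpha> x z = cone_idx k \<alpha> x y"

definition cone :: "nat \<Rightarrow> real \<Rightarrow> complex \<Rightarrow> nat \<Rightarrow> complex set" where
  "cone k \<alpha> x j = {z. z \<noteq> x \<and> cone_idx k \<alpha> x z = j}"

definition udg :: "complex set \<Rightarrow> (complex \<times> complex) set" where
  "udg V = {(x, y). x \<in> V \<and> y \<in> V \<and> x \<noteq> y \<and> dist x y \<le> 1}"

definition dID :: "(complex \<Rightarrow> nat) \<Rightarrow> complex \<Rightarrow> complex \<Rightarrow> real \<times> nat \<times> nat" where
  "dID idf x y = (dist x y, idf x, idf y)"

definition lex_le :: "real \<times> nat \<times> nat \<Rightarrow> real \<times> nat \<times> nat \<Rightarrow> bool" where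
  "lex_le p q \<longleftrightarrow> fst p < fst q \<or> (fst p = fst q \<and>
     (fst (snd p) < fst (snd q) \<or> (fst (snd p) = fst (snd q) \<and> snd (snd p) \<le> snd (snd q))))"

definition uID :: "(complex \<Rightarrow> nat) \<Rightarrow> complex \<Rightarrow> complex \<Rightarrow> real \<times> nat \<times> nat" where
  "uID idf x y = (if lex_le (dID idf x y) (dID idf y x) then dID idf x y else dID idf y x)"

(* Yao step: directed edge (x,y) means x -> y *)
definition yao :: "nat \<Rightarrow> real \<Rightarrow> (complex \<Rightarrow> nat) \<Rightarrow> complex set \<Rightarrow> (complex \<times> complex) set" where
  "yao k \<alpha> idf V = {(x, y). (x, y) \<in> udg V \<and>
     (\<forall>z. (x, z) \<in> udg V \<and> in_cone k \<alpha> x y z \<longrightarrow> lex_le (uID idf x y) (uID idf x z))}"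

(* Sink step, tree T(v) for cone j of v.  sink_proc k alpha idf EY v j S x means:
   node x is (eventually) taken from J and processed, with I(x) = S. *)
inductive sink_proc :: "nat \<Rightarrow> real \<Rightarrow> (complex \<Rightarrow> nat) \<Rightarrow> (complex \<times> complex) set
    \<Rightarrow> complex \<Rightarrow> nat \<Rightarrow> complex set \<Rightarrow> complex \<Rightarrow> bool"
  for k \<alpha> idf EY v j where
  root: "sink_proc k \<alpha> idf EY v j {x. (x, v) \<in> EY \<and> x \<in> cone k \<alpha> v j} v"
| step: "sink_proc k \<alpha> idf EY v j S x \<Longrightarrow> j' < k \<Longrightarrow> w \<in> S \<inter> cone k \<alpha> x j' \<Longrightarrow>
         (\<forall>w' \<in> S \<inter> cone k \<alpha> x j'. lex_le (dID idf w x) (dID idf w' x)) \<Longrightarrow>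
         sink_proc k \<alpha> idf EY v j (S \<inter> cone k \<alpha> x j') w"

(* E_YS: all directed edges w -> x added to some T(v) *)
definition sink :: "nat \<Rightarrow> real \<Rightarrow> (complex \<Rightarrow> nat) \<Rightarrow> (complex \<times> complex) set \<Rightarrow> (complex \<times> complex) set" where
  "sink k \<alpha> idf EY = {(w, x). \<exists>v j S j'. j < k \<and> sink_proc k \<alpha> idf EY v j S x \<and> j' < k \<and>
      w \<in> S \<inter> cone k \<alpha> x j' \<and> (\<forall>w' \<in> S \<inter> cone k \<alpha> x j'. lex_le (dID idf w x) (dID idf w' x))}"

end

theory Submission
  imports Defs
begin

lemma floor_k_frac:
  assumes "k > 0"
  shows "\<lfloor>real k * frac (x / real k)\<rfloor> = \<lfloor>x\<rfloor> mod int k"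
proof -
  have "real k * frac (x / real k) = x - of_int (int k * \<lfloor>x / real k\<rfloor>)"
    using assms by (simp add: frac_def field_simps)
  hence "\<lfloor>real k * frac (x / real k)\<rfloor> = \<lfloor>x\<rfloor> - int k * \<lfloor>x / real k\<rfloor>"
    by (metis floor_diff_of_int)
  also have "\<lfloor>x / real k\<rfloor> = \<lfloor>x\<rfloor> div int k"
    using floor_divide_real_eq_div[of "int k" x] by simp
  finally show ?thesis by (simp add: minus_mult_div_eq_mod)
qed

lemma Arg_cis_ex: "\<exists>n::int. Arg (cis b) = b + 2 * pi * n"
proof -
  have "cis (Arg (cis b)) = cis b"
    using rcis_cmod_Arg[of "cis b"] by (simp add: rcis_def)
  hence "exp (\<i> * complex_of_real (Arg (cis b))) = exp (\<i> * complex_of_real b)"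
    by (simp add: cis_conv_exp)
  then obtain n where n: "\<i> * complex_of_real (Arg (cis b)) = \<i> * complex_of_real b + complex_of_real (real_of_int (2 * n) * pi) * \<i>"
    using exp_eq by blast
  have "Arg (cis b) = b + 2 * pi * n"
    using arg_cong[OF n, of Im] by simp
  thus ?thesis by blast
qed

lemma cone_idx_polar:
  assumes "k > 0" "\<rho> > 0" "y - x = complex_of_real \<rho> * cis b"
  shows "cone_idx k \<alpha> x y = nat (\<lfloor>(b - \<alpha>) / (2 * pi / real k)\<rfloor> mod int k)"
proof -
  have y: "y - x \<noteq> 0" using assms by simp
  have "Arg (y - x) = Arg (cis b)" using assms(2,3) by (simp add: Arg_times_of_real)
  then obtain n::int where n: "Arg (y - x) = b + 2 * pi * n" using Arg_cis_ex by metis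
  have "(Arg (y - x) - \<alpha>) / (2 * pi) = ((b - \<alpha>) / (2 * pi / real k)) / real k + of_int n"
    using assms(1) by (simp add: n field_simps)
  hence "frac ((Arg (y - x) - \<alpha>) / (2 * pi)) = frac (((b - \<alpha>) / (2 * pi / real k)) / real k)"
    by (simp add: frac_add_of_int_right)
  hence "cone_idx k \<alpha> x y = nat \<lfloor>real k * frac (((b - \<alpha>) / (2 * pi / real k)) / real k)\<rfloor>"
    unfolding cone_idx_def by simp
  thus ?thesis using floor_k_frac[OF assms(1), of "(b - \<alpha>) / (2 * pi / real k)"] by simp
qed

lemma fl_shift:
  assumes "k > 0"
  shows "\<lfloor>(b + 2 * pi * of_int n - \<alpha>) / (2 * pi / real k)\<rfloor> = \<lfloor>(b - \<alpha>) / (2 * pi / real k)\<rfloor> + int k * n"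
proof -
  have "(b + 2 * pi * of_int n - \<alpha>) / (2 * pi / real k) = (b - \<alpha>) / (2 * pi / real k) + of_int (int k * n)"
    using assms by (simp add: field_simps)
  thus ?thesis by (metis floor_add_int)
qed

lemma cis_shift: "cis (b + 2 * pi * of_int n) = cis b"
proof -
  have e: "2 * pi * real_of_int n = real_of_int n * (2 * pi)" by simp
  show ?thesis unfolding e using cos.plus_of_int[of b n] sin.plus_of_int[of b n] by (simp add: cis.ctr)
qed

lemma same_cone_shift:
  assumes "k > 0"
    and "\<lfloor>(b1 - \<alpha>) / (2 * pi / real k)\<rfloor> mod int k = \<lfloor>(b2 - \<alpha>) / (2 * pi / real k)\<rfloor> mod int k"
  shows "\<exists>b1'. cis b1' = cis b1 \<and> \<lfloor>(b1' - \<alpha>) / (2 * pi / real k)\<rfloor> = \<lfloor>(b2 - \<alpha>) / (2 * pi / real k)\<rfloor>"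
proof -
  define f1 where "f1 = \<lfloor>(b1 - \<alpha>) / (2 * pi / real k)\<rfloor>"
  define f2 where "f2 = \<lfloor>(b2 - \<alpha>) / (2 * pi / real k)\<rfloor>"
  have "int k dvd f2 - f1" using assms(2) unfolding f1_def f2_def by (metis mod_eq_dvd_iff)
  then obtain n where n: "f2 - f1 = int k * n" by blast
  show ?thesis
    apply (rule exI[of _ "b1 + 2 * pi * of_int n"])
    using fl_shift[OF assms(1), of b1 n \<alpha>] n unfolding f1_def f2_def by (simp add: cis_shift)
qed
lemma Im_rcis_mult: "Im (complex_of_real R * cis p * cis t) = R * sin (p + t)"
  by (simp add: mult.assoc cis_mult)

lemma core:
  assumes "0 < \<theta>" "\<theta> \<le> pi/4" "0 \<le> r" "r * (2 * cos \<theta>) < R"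
    "0 \<le> p" "p < \<theta>" "0 \<le> s" "s < \<theta>"
  defines "Z0 \<equiv> complex_of_real R * cis p - complex_of_real r * cis s"
  shows "Z0 \<noteq> 0 \<and> -\<theta> < Arg Z0 \<and> Arg Z0 < 2 * \<theta>"
proof -
  have pi4: "pi/4 < pi/2" by simp
  have sp: "sin \<theta> > 0" using assms(1,2) by (intro sin_gt_zero) (auto simp: pi4)
  have cp: "cos \<theta> > 0" using assms(1,2) by (intro cos_gt_zero) auto
  have im1: "Im (Z0 * cis \<theta>) = R * sin (p + \<theta>) - r * sin (s + \<theta>)"
    unfolding Z0_def by (simp only: left_diff_distrib minus_complex.sel Im_rcis_mult)
  have im2: "Im (Z0 * cis (- 2 * \<theta>)) = R * sin (p - 2 * \<theta>) - r * sin (s - 2 * \<theta>)"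
    unfolding Z0_def by (simp only: left_diff_distrib minus_complex.sel Im_rcis_mult) simp
  have A1: "sin \<theta> \<le> sin (p + \<theta>)" using assms by (intro sin_monotone_2pi_le) auto
  have A2: "sin (s + \<theta>) \<le> sin (2 * \<theta>)" using assms by (intro sin_monotone_2pi_le) auto
  have B1: "sin (p - 2 * \<theta>) \<le> sin (- \<theta>)" using assms by (intro sin_monotone_2pi_le) auto
  have B2: "sin (- (2 * \<theta>)) \<le> sin (s - 2 * \<theta>)" using assms by (intro sin_monotone_2pi_le) auto
  have sd: "sin (2 * \<theta>) = 2 * sin \<theta> * cos \<theta>" by (simp add: sin_double)
  have "r * (2 * cos \<theta>) \<ge> 0" using assms(3) cp by simp
  hence R0: "R > 0" using assms(4) by linarith
  have key: "r * sin (2 * \<theta>) < R * sin \<theta>"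
  proof -
    have "r * sin (2 * \<theta>) = (r * (2 * cos \<theta>)) * sin \<theta>" using sd by simp
    also have "\<dots> < R * sin \<theta>" by (rule mult_strict_right_mono[OF assms(4) sp])
    finally show ?thesis .
  qed
  have rs1: "r * sin (s + \<theta>) \<le> r * sin (2 * \<theta>)" using A2 assms(3) by (simp add: mult_left_mono)
  have rs2: "R * sin \<theta> \<le> R * sin (p + \<theta>)" using A1 R0 by simp
  have I1: "Im (Z0 * cis \<theta>) > 0" using im1 key rs1 rs2 by linarith
  have rs3: "R * sin (p - 2 * \<theta>) \<le> - R * sin \<theta>" using mult_left_mono[OF B1, of R] R0 by simp
  have rs4: "- (r * sin (2 * \<theta>)) \<le> r * sin (s - 2 * \<theta>)" using B2 assms(3)
    by (metis minus_mult_right mult_left_mono sin_minus)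
  have I2: "Im (Z0 * cis (- 2 * \<theta>)) < 0" using im2 key rs3 rs4 by linarith
  have Z0: "Z0 \<noteq> 0" using I1 by auto
  define a where "a = Arg Z0"
  have Zp: "Z0 = complex_of_real (cmod Z0) * cis a" using rcis_cmod_Arg[of Z0] by (simp add: rcis_def a_def)
  have cm: "cmod Z0 > 0" using Z0 by simp
  have "Im (Z0 * cis \<theta>) = cmod Z0 * sin (a + \<theta>)" by (subst Zp) (rule Im_rcis_mult)
  hence s1: "sin (a + \<theta>) > 0" using I1 cm by (simp add: zero_less_mult_iff)
  have "Im (Z0 * cis (- 2 * \<theta>)) = cmod Z0 * sin (a + - 2 * \<theta>)" by (subst Zp) (rule Im_rcis_mult)
  hence s2: "sin (a - 2 * \<theta>) < 0" using I2 cm by (simp add: mult_less_0_iff)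
  have ab: "- pi < a" "a \<le> pi" using Arg_bounded a_def by auto
  have g1: "- \<theta> < a"
  proof (rule ccontr)
    assume "\<not> - \<theta> < a"
    hence "sin (- (a + \<theta>)) \<ge> 0" using ab assms(1,2) by (intro sin_ge_zero) auto
    moreover have "sin (- (a + \<theta>)) = - sin (a + \<theta>)" by (rule sin_minus)
    ultimately show False using s1 by linarith
  qed
  have g2: "a < 2 * \<theta>"
  proof (rule ccontr)
    assume "\<not> a < 2 * \<theta>"
    hence "sin (a - 2 * \<theta>) \<ge> 0" using ab assms(1,2) by (intro sin_ge_zero) auto
    thus False using s2 by simp
  qed
  show ?thesis using Z0 g1 g2 a_def by simp
qed
lemma nat_mod_eq:
  assumes "nat (a mod int k) = nat (b mod int k)" "k > 0"
  shows "a mod int k = b mod int k"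
proof -
  have "a mod int k \<ge> 0" "b mod int k \<ge> 0" using assms(2) by simp_all
  thus ?thesis using assms(1) by (metis eq_nat_nat_iff)
qed

lemma fl_bounds:
  assumes "\<theta> > 0" "\<lfloor>(b - \<alpha>) / \<theta>\<rfloor> = j"
  shows "of_int j * \<theta> \<le> b - \<alpha> \<and> b - \<alpha> < (of_int j + 1) * \<theta>"
proof -
  have "of_int j \<le> (b - \<alpha>) / \<theta>" "(b - \<alpha>) / \<theta> < of_int j + 1"
    using assms(2) floor_eq_iff by blast+
  thus ?thesis using assms(1) by (simp add: pos_le_divide_eq pos_divide_less_eq)
qed

lemma polar: "z = complex_of_real (cmod z) * cis (Arg z)"
  using rcis_cmod_Arg[of z] by (simp add: rcis_def)

lemma Re_rcis: "Re (complex_of_real R * cis b * cis t) = R * cos (b + t)"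
  by (simp add: mult.assoc cis_mult)

theorem lemma3:
  fixes k :: nat and \<alpha> :: real and idf :: "complex \<Rightarrow> nat" and V :: "complex set"
    and u v :: complex and w :: "nat \<Rightarrow> complex" and h :: nat
  defines "\<theta> \<equiv> 2 * pi / real k"
  defines "EY \<equiv> yao k \<alpha> idf V"
  defines "EYS \<equiv> sink k \<alpha> idf EY"
  assumes "k > 8"
    and "finite V" and "inj_on idf V"
    and "(u, v) \<in> EY"
    and "w 0 = v" and "w h = u"
    and "\<forall>i \<le> h. w i \<in> V"
    and "\<forall>i \<in> {1..h}. in_cone k \<alpha> v u (w i)"
    and "\<forall>i \<in> {1..h}. (w i, w (i - 1)) \<in> EYS"
    and "\<forall>i \<in> {1..h}. in_cone k \<alpha> (w (i - 1)) u (w i)"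
    and "\<forall>i \<in> {1..h}. lex_le (dID idf (w i) (w (i - 1))) (dID idf u (w (i - 1)))"
  shows "\<exists>l \<le> h. dist v (w l) \<ge> dist u v / (2 * cos \<theta>) \<and>
           (\<Sum>i<l. dist (w i) (w (Suc i))) \<le> dist v (w l) / cos (2 * \<theta>)"
proof -
  have kpos: "k > 0" using assms(4) by simp
  have tpos: "\<theta> > 0" unfolding \<theta>_def using kpos by simp
  have tlt: "\<theta> < pi / 4" unfolding \<theta>_def using assms(4) by (simp add: field_simps)
  have c2: "cos (2 * \<theta>) > 0" using tpos tlt by (intro cos_gt_zero) auto
  have "cos (pi / 3) \<le> cos \<theta>" using tpos tlt by (intro cos_monotone_0_pi_le) auto
  hence ch: "2 * cos \<theta> \<ge> 1" by (simp add: cos_60)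
  define D where "D = dist u v"
  define P where "P l \<longleftrightarrow> D / (2 * cos \<theta>) \<le> dist v (w l)" for l
  have D0: "D \<ge> 0" unfolding D_def by simp
  have Ph: "P h"
  proof -
    have "D \<le> D * (2 * cos \<theta>)" using D0 ch by (metis mult_left_mono mult.right_neutral)
    hence "D / (2 * cos \<theta>) \<le> D" using ch by (simp add: pos_divide_le_eq)
    thus ?thesis unfolding P_def D_def using assms(9) by (simp add: dist_commute)
  qed
  define l0 where "l0 = (LEAST l. P l)"
  have Pl0: "P l0" unfolding l0_def using Ph by (rule LeastI)
  have l0h: "l0 \<le> h" unfolding l0_def using Ph by (rule Least_le)
  have notP: "\<not> P i" if "i < l0" for i using that unfolding l0_def by (rule not_less_Least)
  have sumb: "(\<Sum>i<l0. dist (w i) (w (Suc i))) \<le> dist v (w l0) / cos (2 * \<theta>)"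
  proof (cases "l0 = 0")
    case True thus ?thesis using assms(8) by simp
  next
    case False
    hence "\<not> P 0" using notP by simp
    hence Dpos: "D > 0" unfolding P_def using assms(8) ch
      by (smt (verit) dist_self divide_nonpos_pos)
    define bu where "bu = Arg (u - v)"
    have U: "u - v = complex_of_real D * cis bu" unfolding bu_def D_def dist_norm by (rule polar)
    define j where "j = \<lfloor>(bu - \<alpha>) / \<theta>\<rfloor>"
    define c where "c = \<alpha> + (of_int j + 1/2) * \<theta>"
    have step: "cos (2 * \<theta>) * dist (w i) (w (Suc i)) \<le> Re ((w (Suc i) - w i) * cis (- c))"
      if il: "i < l0" for i
    proof -
      have ih: "i < h" using il l0h by simp
      have "\<not> P i" using notP il .
      hence "dist v (w i) < D / (2 * cos \<theta>)" unfolding P_def by simp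
      hence rlt: "dist v (w i) * (2 * cos \<theta>) < D" using ch
        by (simp add: pos_less_divide_eq)
      obtain r bw where W: "w i - v = complex_of_real r * cis bw" and r0: "r \<ge> 0"
        and rl: "r * (2 * cos \<theta>) < D" and fw: "\<lfloor>(bw - \<alpha>) / \<theta>\<rfloor> = j"
      proof (cases "i = 0")
        case True
        show ?thesis by (rule that[of 0 bu]) (use True assms(8) Dpos j_def in auto)
      next
        case False
        hence "in_cone k \<alpha> v u (w i)" using assms(11) ih by auto
        hence ne: "w i \<noteq> v" and ci: "cone_idx k \<alpha> v (w i) = cone_idx k \<alpha> v u"
          unfolding in_cone_def by auto
        define bw0 where "bw0 = Arg (w i - v)"
        have W0: "w i - v = complex_of_real (cmod (w i - v)) * cis bw0" unfolding bw0_def by (rule polar)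
        have "cone_idx k \<alpha> v (w i) = nat (\<lfloor>(bw0 - \<alpha>) / \<theta>\<rfloor> mod int k)"
          unfolding \<theta>_def using ne by (intro cone_idx_polar[OF kpos _ W0]) simp
        moreover have "cone_idx k \<alpha> v u = nat (\<lfloor>(bu - \<alpha>) / \<theta>\<rfloor> mod int k)"
          unfolding \<theta>_def using Dpos by (intro cone_idx_polar[OF kpos _ U])
        ultimately have "\<lfloor>(bw0 - \<alpha>) / \<theta>\<rfloor> mod int k = \<lfloor>(bu - \<alpha>) / \<theta>\<rfloor> mod int k"
          using ci kpos nat_mod_eq by metis
        then obtain bw where eb: "cis bw = cis bw0" and fb: "\<lfloor>(bw - \<alpha>) / \<theta>\<rfloor> = j"
          using same_cone_shift[OF kpos] unfolding \<theta>_def j_def by blast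
        have W1: "w i - v = complex_of_real (cmod (w i - v)) * cis bw"
          using W0 unfolding eb[symmetric] .
        have dn: "dist v (w i) = cmod (w i - v)" by (simp add: dist_norm norm_minus_commute)
        show ?thesis by (rule that[OF W1 _ _ fb]) (use rlt dn in auto)
      qed
      define p where "p = bu - (\<alpha> + of_int j * \<theta>)"
      define s where "s = bw - (\<alpha> + of_int j * \<theta>)"
      have pb: "0 \<le> p" "p < \<theta>" using fl_bounds[OF tpos j_def[symmetric]] unfolding p_def
        by (auto simp: algebra_simps)
      have sb: "0 \<le> s" "s < \<theta>" using fl_bounds[OF tpos fw] unfolding s_def
        by (auto simp: algebra_simps)
      define Z0 where "Z0 = complex_of_real D * cis p - complex_of_real r * cis s"
      have cr: "Z0 \<noteq> 0 \<and> -\<theta> < Arg Z0 \<and> Arg Z0 < 2 * \<theta>"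
        unfolding Z0_def using tpos tlt r0 rl pb sb by (intro core) auto
      define a where "a = Arg Z0"
      define bZ where "bZ = \<alpha> + of_int j * \<theta> + a"
      have "u - w i = (u - v) - (w i - v)" by simp
      also have "\<dots> = cis (\<alpha> + of_int j * \<theta>) * Z0"
        unfolding U W Z0_def p_def s_def by (simp add: algebra_simps cis_mult)
      also have "\<dots> = complex_of_real (cmod Z0) * cis bZ"
        by (subst polar[of Z0]) (simp add: bZ_def a_def cis_mult algebra_simps)
      finally have Z: "u - w i = complex_of_real (cmod Z0) * cis bZ" .
      have Zpos: "cmod Z0 > 0" using cr by simp
      have "(bZ - \<alpha>) / \<theta> = of_int j + a / \<theta>" unfolding bZ_def using tpos by (simp add: field_simps)
      moreover have "-1 < a / \<theta>" "a / \<theta> < 2" using cr tpos unfolding a_def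
        by (simp_all add: pos_less_divide_eq pos_divide_less_eq)
      ultimately have mb: "j - 1 \<le> \<lfloor>(bZ - \<alpha>) / \<theta>\<rfloor>" "\<lfloor>(bZ - \<alpha>) / \<theta>\<rfloor> \<le> j + 1"
        by (simp_all add: le_floor_iff floor_le_iff)
      have "Suc i \<in> {1..h}" using ih by simp
      hence "in_cone k \<alpha> (w (Suc i - 1)) u (w (Suc i))" using assms(13) by blast
      hence ne2: "w (Suc i) \<noteq> w i" and ci2: "cone_idx k \<alpha> (w i) (w (Suc i)) = cone_idx k \<alpha> (w i) u"
        unfolding in_cone_def by auto
      define bS0 where "bS0 = Arg (w (Suc i) - w i)"
      define \<sigma> where "\<sigma> = cmod (w (Suc i) - w i)"
      have S0: "w (Suc i) - w i = complex_of_real \<sigma> * cis bS0" unfolding bS0_def \<sigma>_def by (rule polar)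
      have spos: "\<sigma> > 0" using ne2 unfolding \<sigma>_def by simp
      have "cone_idx k \<alpha> (w i) (w (Suc i)) = nat (\<lfloor>(bS0 - \<alpha>) / \<theta>\<rfloor> mod int k)"
        unfolding \<theta>_def by (rule cone_idx_polar[OF kpos spos S0])
      moreover have "cone_idx k \<alpha> (w i) u = nat (\<lfloor>(bZ - \<alpha>) / \<theta>\<rfloor> mod int k)"
        unfolding \<theta>_def by (rule cone_idx_polar[OF kpos Zpos Z])
      ultimately have "\<lfloor>(bS0 - \<alpha>) / \<theta>\<rfloor> mod int k = \<lfloor>(bZ - \<alpha>) / \<theta>\<rfloor> mod int k"
        using ci2 kpos nat_mod_eq by metis
      then obtain bS where cS: "cis bS = cis bS0" and fS: "\<lfloor>(bS - \<alpha>) / \<theta>\<rfloor> = \<lfloor>(bZ - \<alpha>) / \<theta>\<rfloor>"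
        using same_cone_shift[OF kpos] unfolding \<theta>_def by blast
      have Sb: "of_int \<lfloor>(bZ - \<alpha>) / \<theta>\<rfloor> * \<theta> \<le> bS - \<alpha>" "bS - \<alpha> < (of_int \<lfloor>(bZ - \<alpha>) / \<theta>\<rfloor> + 1) * \<theta>"
        using fl_bounds[OF tpos fS] by auto
      have m1: "(of_int j - 1) * \<theta> \<le> of_int \<lfloor>(bZ - \<alpha>) / \<theta>\<rfloor> * \<theta>"
        using mb(1) tpos by (intro mult_right_mono) auto
      have m2: "(of_int \<lfloor>(bZ - \<alpha>) / \<theta>\<rfloor> + 1) * \<theta> \<le> (of_int j + 2) * \<theta>"
        using mb(2) tpos by (intro mult_right_mono) auto
      have ab: "\<bar>bS - c\<bar> \<le> 2 * \<theta>" using Sb m1 m2 tpos unfolding c_def by (auto simp: algebra_simps abs_le_iff)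
      have "cos (2 * \<theta>) \<le> cos \<bar>bS - c\<bar>" using ab tpos tlt by (intro cos_monotone_0_pi_le) auto
      hence cb: "cos (2 * \<theta>) \<le> cos (bS - c)" by simp
      have "Re ((w (Suc i) - w i) * cis (- c)) = \<sigma> * cos (bS - c)"
        unfolding S0 cS[symmetric] Re_rcis by simp
      moreover have "dist (w i) (w (Suc i)) = \<sigma>" unfolding \<sigma>_def by (simp add: dist_norm norm_minus_commute)
      ultimately show ?thesis using cb spos by (simp add: mult.commute mult_left_mono)
    qed
    have "cos (2 * \<theta>) * (\<Sum>i<l0. dist (w i) (w (Suc i))) = (\<Sum>i<l0. cos (2 * \<theta>) * dist (w i) (w (Suc i)))"
      by (simp add: sum_distrib_left)
    also have "\<dots> \<le> (\<Sum>i<l0. Re ((w (Suc i) - w i) * cis (- c)))"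
      by (rule sum_mono) (use step in auto)
    also have "\<dots> = Re ((\<Sum>i<l0. w (Suc i) - w i) * cis (- c))"
      by (simp add: sum_distrib_right)
    also have "\<dots> = Re ((w l0 - v) * cis (- c))"
      by (simp add: sum_lessThan_telescope assms(8))
    also have "\<dots> \<le> cmod ((w l0 - v) * cis (- c))" by (rule complex_Re_le_cmod)
    also have "\<dots> = dist v (w l0)" by (simp add: norm_mult dist_norm norm_minus_commute)
    finally show ?thesis using c2 by (simp add: pos_le_divide_eq mult.commute)
  qed
  show ?thesis using Pl0 l0h sumb unfolding P_def D_def by blast
qed
end
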